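(* Let $\mathcal{A}$ be an $AW^*$-algebra and let $p,q\in\mathcal{A}$ be projections. Then $p$ and $q$ are orthogonal (i.e. $pq=0$) if and only if $$\inf_{\mathcal{A}^1}\{p,\tfrac12\}=\inf_{\mathcal{A}^1}\Big\{p,\ \sup_{\mathcal{A}^1}\{q,\tfrac12\}\Big\}.$$
   Context: $\mathcal{A}$ is unital. An $AW^*$-algebra is a $C^*$-algebra $\mathcal{A}$ such that for every nonempty $\mathcal{F}\subseteq\mathcal{A}$ there is a projection $p$ with $\{a\in\mathcal{A}:ba=0\ \forall b\in\mathcal{F}\}=p\mathcal{A}$. $\mathcal{A}^1=\{a\in\mathcal{A}^{sa}:0\le a\le1\}$ with order $a\le b\iff b-a\ge0$; $\sup_{\mathcal{A}^1},\inf_{\mathcal{A}^1}$ denote least upper bounds and greatest lower bounds in $\mathcal{A}^1$ (for a projection $q$ one has $\sup_{\mathcal{A}^1}\{q,\tfrac12\}=q+\tfrac12(1-q)$, and $\inf_{\mathcal{A}^1}\{p,\tfrac12\}=\tfrac12p$). *)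

theory Defs
  imports Complex_Main
begin

text \<open>The real vector structure inherited
  from the class banach/real_normed_algebra_1 is the restriction of the complex one.\<close>

class cstar_algebra = banach + real_normed_algebra_1 +
  fixes scaleC :: "complex \<Rightarrow> 'a \<Rightarrow> 'a"
    and adj :: "'a \<Rightarrow> 'a"
  assumes scaleC_add_right: "scaleC c (x + y) = scaleC c x + scaleC c y"
    and scaleC_add_left: "scaleC (c + d) x = scaleC c x + scaleC d x"
    and scaleC_scaleC: "scaleC c (scaleC d x) = scaleC (c * d) x"
    and scaleC_one: "scaleC 1 x = x"
    and scaleR_scaleC: "scaleR r x = scaleC (complex_of_real r) x"
    and norm_scaleC: "norm (scaleC c x) = cmod c * norm x"
    and mult_scaleC_left: "scaleC c x * y = scaleC c (x * y)"
    and mult_scaleC_right: "x * scaleC c y = scaleC c (x * y)"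
    and adj_adj: "adj (adj x) = x"
    and adj_add: "adj (x + y) = adj x + adj y"
    and adj_mult: "adj (x * y) = adj y * adj x"
    and adj_scaleC: "adj (scaleC c x) = scaleC (cnj c) (adj x)"
    and cstar_identity: "norm (adj x * x) = norm x * norm x"

context cstar_algebra
begin

definition invertible_el :: "'a \<Rightarrow> bool" where
  "invertible_el x \<longleftrightarrow> (\<exists>y. x * y = 1 \<and> y * x = 1)"

definition spectrum :: "'a \<Rightarrow> complex set" where
  "spectrum a = {c. \<not> invertible_el (scaleC c 1 - a)}"

definition selfadjoint :: "'a \<Rightarrow> bool" where
  "selfadjoint a \<longleftrightarrow> adj a = a"

definition positive :: "'a \<Rightarrow> bool" where
  "positive a \<longleftrightarrow> selfadjoint a \<and> spectrum a \<subseteq> complex_of_real ` {0..}"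

definition cle :: "'a \<Rightarrow> 'a \<Rightarrow> bool" where
  "cle a b \<longleftrightarrow> positive (b - a)"

definition projection :: "'a \<Rightarrow> bool" where
  "projection p \<longleftrightarrow> p * p = p \<and> adj p = p"

definition unit_interval :: "'a set" where
  "unit_interval = {a. selfadjoint a \<and> cle 0 a \<and> cle a 1}"

definition is_sup1 :: "'a set \<Rightarrow> 'a \<Rightarrow> bool" where
  "is_sup1 S x \<longleftrightarrow> x \<in> unit_interval \<and> (\<forall>s\<in>S. cle s x) \<and>
     (\<forall>y\<in>unit_interval. (\<forall>s\<in>S. cle s y) \<longrightarrow> cle x y)"

definition is_inf1 :: "'a set \<Rightarrow> 'a \<Rightarrow> bool" where
  "is_inf1 S x \<longleftrightarrow> x \<in> unit_interval \<and> (\<forall>s\<in>S. cle x s) \<and>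
     (\<forall>y\<in>unit_interval. (\<forall>s\<in>S. cle y s) \<longrightarrow> cle y x)"

end

class aw_star_algebra = cstar_algebra +
  assumes aw_star: "F \<noteq> {} \<Longrightarrow>
     \<exists>p. projection p \<and> {a. \<forall>b\<in>F. b * a = 0} = {p * x | x. True}"

end

theory Submission
  imports Defs "HOL-Analysis.Topology_Euclidean_Space"
begin

definition cs :: "complex \<Rightarrow> 'a::cstar_algebra" where "cs c = scaleC c 1"

lemma scaleC_zero_left[simp]: "scaleC 0 x = 0"
  using scaleC_add_left[of 0 0 x] by simp

lemma scaleC_zero_right[simp]: "scaleC c 0 = 0"
  using scaleC_add_right[of c 0 0] by simp

lemma scaleC_minus_right: "scaleC c (- x) = - scaleC c x"
proof -
  have "scaleC c x + scaleC c (-x) = 0" using scaleC_add_right[of c x "-x"] by simp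
  thus ?thesis using minus_unique by metis
qed

lemma scaleC_minus_left: "scaleC (- c) x = - scaleC c x"
proof -
  have "scaleC c x + scaleC (-c) x = 0" using scaleC_add_left[of c "-c" x] by simp
  thus ?thesis using minus_unique by metis
qed

lemma scaleC_diff_right: "scaleC c (x - y) = scaleC c x - scaleC c y"
  using scaleC_add_right[of c x "-y"] scaleC_minus_right by simp

lemma scaleC_diff_left: "scaleC (c - d) x = scaleC c x - scaleC d x"
  using scaleC_add_left[of c "-d" x] scaleC_minus_left by simp

lemma scaleC_eq_mult: "scaleC c x = cs c * x"
  by (simp add: cs_def mult_scaleC_left)

lemma scaleC_eq_mult2: "scaleC c x = x * cs c"
  by (simp add: cs_def mult_scaleC_right)

lemma cs_comm: "cs c * x = x * cs c"
  using scaleC_eq_mult scaleC_eq_mult2 by metis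

lemma cs_add: "cs (c + d) = cs c + cs d"
  by (simp add: cs_def scaleC_add_left)

lemma cs_diff: "cs (c - d) = cs c - cs d"
  by (simp add: cs_def scaleC_diff_left)

lemma cs_minus: "cs (- c) = - cs c"
  by (simp add: cs_def scaleC_minus_left)

lemma cs_mult: "cs (c * d) = cs c * cs d"
  by (simp add: cs_def mult_scaleC_left scaleC_scaleC)

lemma cs_one[simp]: "cs 1 = 1"
  by (simp add: cs_def scaleC_one)

lemma cs_zero[simp]: "cs 0 = 0"
  by (simp add: cs_def)

lemma cs_of_real: "cs (complex_of_real r) = of_real r"
  unfolding cs_def by (simp add: of_real_def scaleR_scaleC)

lemma scaleR_eq_mult: "scaleR r x = of_real r * (x::'a::cstar_algebra)"
  by (simp add: scaleR_scaleC scaleC_eq_mult cs_of_real)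

lemma norm_cs: "norm (cs c) = cmod c"
  by (simp add: cs_def norm_scaleC)

lemma cs_power: "cs (c ^ n) = cs c ^ n"
  by (induct n) (simp_all add: cs_mult)

lemma cs_sum: "cs (sum f S) = sum (\<lambda>i. cs (f i)) S"
  by (induct S rule: infinite_finite_induct) (simp_all add: cs_add)

lemma cs_inj: assumes "(cs c :: 'a::cstar_algebra) = cs d" shows "c = d"
proof -
  have "cmod (c - d) = norm (cs c - cs d :: 'a)" by (simp add: norm_cs cs_diff[symmetric])
  thus ?thesis using assms by simp
qed

lemma adj_zero[simp]: "adj 0 = 0"
  using adj_add[of 0 0] by simp

lemma adj_minus: "adj (- x) = - adj x"
proof -
  have "adj x + adj (-x) = 0" using adj_add[of x "-x"] by simp
  thus ?thesis using minus_unique by metis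
qed

lemma adj_diff: "adj (x - y) = adj x - adj y"
  using adj_add[of x "-y"] adj_minus by simp

lemma adj_one[simp]: "adj 1 = 1"
proof -
  have "adj (adj 1 * 1) = adj 1 * adj (adj 1)" by (rule adj_mult)
  thus ?thesis by (simp add: adj_adj)
qed

lemma adj_cs: "adj (cs c) = cs (cnj c)"
  by (simp add: cs_def adj_scaleC)

lemma adj_of_real: "adj (of_real r) = of_real r"
  using adj_cs[of "complex_of_real r"] by (simp add: cs_of_real)

lemma adj_scaleR: "adj (scaleR r x) = scaleR r (adj x)"
  by (simp add: scaleR_eq_mult adj_mult adj_of_real) (metis cs_comm cs_of_real)

lemma adj_power: "adj (x ^ n) = adj x ^ n"
proof (induct n)
  case (Suc n)
  then show ?case by (simp add: adj_mult power_commutes)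
qed simp

lemma norm_adj: "norm (adj x) = norm x"
proof -
  have a: "norm y \<le> norm (adj y)" for y
  proof (cases "y = 0")
    case False
    have "norm y * norm y = norm (adj y * y)" by (simp add: cstar_identity)
    also have "\<dots> \<le> norm (adj y) * norm y" by (rule norm_mult_ineq)
    finally show ?thesis using False by simp
  qed simp
  show ?thesis using a[of x] a[of "adj x"] by (simp add: adj_adj)
qed

lemma adj_eq_zero: "adj x = 0 \<longleftrightarrow> x = 0"
  by (metis adj_adj adj_zero)

lemma cstar_zero: "adj x * x = 0 \<Longrightarrow> x = 0"
  using cstar_identity[of x] by simp

lemma invertible_one[simp]: "invertible_el 1"
  by (auto simp: invertible_el_def)

lemma invertible_lr: "x * l = 1 \<Longrightarrow> r * x = 1 \<Longrightarrow> invertible_el x"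
  unfolding invertible_el_def
  by (metis mult.assoc mult_1_left mult_1_right)

lemma invertible_el_mult: "invertible_el a \<Longrightarrow> invertible_el b \<Longrightarrow> invertible_el (a * b)"
  unfolding invertible_el_def
  by (metis (no_types, lifting) mult.assoc mult_1_left)

lemma invertible_comm_factor:
  assumes "a * b = b * a" "invertible_el (a * b)"
  shows "invertible_el a"
proof -
  obtain w where w: "a * b * w = 1" "w * (a * b) = 1" using assms(2) invertible_el_def by auto
  have "a * (b * w) = 1" using w by (simp add: mult.assoc)
  moreover have "(w * b) * a = 1" using w assms(1) by (simp add: mult.assoc)
  ultimately show ?thesis by (rule invertible_lr)
qed

lemma invertible_cs: "c \<noteq> 0 \<Longrightarrow> invertible_el (cs c)"
  unfolding invertible_el_def
  by (rule exI[of _ "cs (inverse c)"]) (simp add: cs_mult[symmetric])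

lemma invertible_adj: "invertible_el x \<Longrightarrow> invertible_el (adj x)"
  unfolding invertible_el_def by (metis adj_mult adj_one)

definition inv_el :: "'a::cstar_algebra \<Rightarrow> 'a" where
  "inv_el x = (SOME y. x * y = 1 \<and> y * x = 1)"

lemma inv_el: assumes "invertible_el x" shows "x * inv_el x = 1" "inv_el x * x = 1"
proof -
  have "\<exists>y. x * y = 1 \<and> y * x = 1" using assms invertible_el_def by auto
  hence "x * inv_el x = 1 \<and> inv_el x * x = 1" unfolding inv_el_def by (rule someI_ex)
  thus "x * inv_el x = 1" "inv_el x * x = 1" by auto
qed

lemma inv_el_unique: assumes "x * y = 1" "y * x = 1" shows "inv_el x = y"
proof -
  have i: "invertible_el x" using assms invertible_el_def by auto
  have "inv_el x = inv_el x * (x * y)" using assms by simp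
  also have "\<dots> = y" using inv_el(2)[OF i] by (simp add: mult.assoc[symmetric])
  finally show ?thesis .
qed

lemma inv_el_comm:
  assumes "invertible_el a" "a * b = b * a" shows "inv_el a * b = b * inv_el a"
proof -
  have "inv_el a * b = inv_el a * b * (a * inv_el a)" using inv_el[OF assms(1)] by simp
  also have "\<dots> = inv_el a * (a * b) * inv_el a" using assms(2) by (simp add: mult.assoc)
  also have "\<dots> = b * inv_el a" using inv_el[OF assms(1)] by (simp add: mult.assoc[symmetric])
  finally show ?thesis .
qed

lemma neumann:
  assumes "norm x < 1"
  shows "invertible_el (1 - x)" "norm (inv_el (1 - x)) \<le> 1 / (1 - norm x)"
proof -
  have sn: "summable (\<lambda>n. norm x ^ n)" using assms by (simp add: summable_geometric)
  have le: "norm (x ^ n) \<le> norm x ^ n" for n by (rule norm_power_ineq)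
  have sm: "summable (\<lambda>n. x ^ n)"
    by (rule summable_comparison_test[OF _ sn]) (use le in auto)
  define s where "s = suminf (\<lambda>n. x ^ n)"
  have h: "(\<Sum>n. x ^ Suc n) = s - 1"
    using suminf_split_head[OF sm] by (simp add: s_def)
  have "x * s = (\<Sum>n. x * x ^ n)" unfolding s_def by (rule suminf_mult[OF sm, symmetric])
  hence xs: "x * s = s - 1" using h by simp
  have "s * x = (\<Sum>n. x ^ n * x)" unfolding s_def by (rule suminf_mult2[OF sm])
  hence sx: "s * x = s - 1" using h by (simp add: power_commutes)
  have r: "(1 - x) * s = 1" using xs by (simp add: algebra_simps)
  have l: "s * (1 - x) = 1" using sx by (simp add: algebra_simps)
  show "invertible_el (1 - x)" using r l invertible_el_def by auto
  have "inv_el (1 - x) = s" using inv_el_unique[OF r l] .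
  moreover have "norm s \<le> 1 / (1 - norm x)"
  proof -
    have "norm s \<le> (\<Sum>n. norm x ^ n)" unfolding s_def
      by (rule norm_suminf_le[OF le sn])
    also have "\<dots> = 1 / (1 - norm x)" using assms by (simp add: suminf_geometric)
    finally show ?thesis .
  qed
  ultimately show "norm (inv_el (1 - x)) \<le> 1 / (1 - norm x)" by simp
qed

lemma invertible_neg1: "invertible_el x \<Longrightarrow> invertible_el (- x)"
  unfolding invertible_el_def by (elim exE, rule_tac x="- y" in exI) simp

lemma invertible_neg: "invertible_el (- x) \<longleftrightarrow> invertible_el x"
  using invertible_neg1[of x] invertible_neg1[of "- x"] by auto

lemma invertible_cs_mult:
  assumes "c \<noteq> 0" shows "invertible_el (cs c * x) \<longleftrightarrow> invertible_el x"
proof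
  assume "invertible_el x" thus "invertible_el (cs c * x)"
    using invertible_el_mult invertible_cs assms by blast
next
  assume "invertible_el (cs c * x)"
  hence "invertible_el (cs (inverse c) * (cs c * x))"
    using invertible_el_mult[OF invertible_cs[of "inverse c"]] assms by auto
  moreover have "cs (inverse c) * (cs c * x) = x"
    by (simp add: mult.assoc[symmetric] cs_mult[symmetric] assms)
  ultimately show "invertible_el x" by simp
qed

lemma perturb:
  fixes a h :: "'a::cstar_algebra"
  assumes a: "invertible_el a" and small: "norm (inv_el a) * norm h < 1"
  shows "invertible_el (a - h)"
    "norm (inv_el (a - h)) \<le> norm (inv_el a) / (1 - norm (inv_el a) * norm h)"
proof -
  let ?a' = "inv_el a"
  have nx: "norm (?a' * h) < 1" using norm_mult_ineq[of ?a' h] small by linarith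
  note N = neumann[OF nx]
  let ?w = "inv_el (1 - ?a' * h)"
  have w1: "(1 - ?a' * h) * ?w = 1" "?w * (1 - ?a' * h) = 1" using inv_el[OF N(1)] by auto
  have "a * (1 - ?a' * h) = a - (a * ?a') * h" by (simp add: right_diff_distrib mult.assoc)
  hence fac: "a - h = a * (1 - ?a' * h)" using inv_el[OF a] by simp
  have "(a - h) * (?w * ?a') = a * ((1 - ?a' * h) * ?w) * ?a'"
    unfolding fac by (simp add: mult.assoc)
  hence r: "(a - h) * (?w * ?a') = 1" using w1 inv_el[OF a] by simp
  have "(?w * ?a') * (a - h) = ?w * (?a' * a) * (1 - ?a' * h)"
    unfolding fac by (simp add: mult.assoc)
  hence l: "(?w * ?a') * (a - h) = 1" using w1 inv_el[OF a] by simp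
  show "invertible_el (a - h)" using r l invertible_el_def by blast
  have e: "inv_el (a - h) = ?w * ?a'" using inv_el_unique[OF r l] .
  have "norm ?w \<le> 1 / (1 - norm (?a' * h))" by (rule N(2))
  also have "\<dots> \<le> 1 / (1 - norm ?a' * norm h)"
    using nx small norm_mult_ineq[of ?a' h] by (intro divide_left_mono) (auto simp: mult_pos_pos)
  finally have nw: "norm ?w \<le> 1 / (1 - norm ?a' * norm h)" .
  have "norm (inv_el (a - h)) \<le> norm ?w * norm ?a'" unfolding e by (rule norm_mult_ineq)
  also have "\<dots> \<le> 1 / (1 - norm ?a' * norm h) * norm ?a'"
    using nw by (intro mult_right_mono) auto
  finally show "norm (inv_el (a - h)) \<le> norm (inv_el a) / (1 - norm (inv_el a) * norm h)"
    by simp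
qed

lemma spec_iff: "c \<in> spectrum a \<longleftrightarrow> \<not> invertible_el (cs c - a)"
  by (simp add: spectrum_def cs_def)

lemma spec_bound: assumes "c \<in> spectrum a" shows "cmod c \<le> norm a"
proof (rule ccontr)
  assume "\<not> cmod c \<le> norm a"
  hence lt: "norm a < cmod c" by simp
  hence c0: "c \<noteq> 0" by auto
  have "norm (cs (inverse c) * a) \<le> cmod (inverse c) * norm a"
    using norm_mult_ineq[of "cs (inverse c)" a] by (simp add: norm_cs)
  also have "\<dots> < 1" using lt c0 by (simp add: norm_inverse divide_simps norm_divide)
  finally have "invertible_el (1 - cs (inverse c) * a)" by (rule neumann)
  hence "invertible_el (cs c * (1 - cs (inverse c) * a))" using invertible_cs_mult c0 by blast
  moreover have "cs c * (1 - cs (inverse c) * a) = cs c - (cs c * cs (inverse c)) * a"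
    by (simp add: right_diff_distrib mult.assoc)
  moreover have "cs c * cs (inverse c) = (1::'a)" using c0 by (simp add: cs_mult[symmetric])
  ultimately show False using assms spec_iff by (metis mult_1)
qed

lemma spec_shift: "c \<in> spectrum (a + cs d) \<longleftrightarrow> c - d \<in> spectrum a"
  by (simp add: spec_iff cs_diff algebra_simps)

lemma spec_neg: "c \<in> spectrum (- a) \<longleftrightarrow> - c \<in> spectrum a"
proof -
  have e: "cs c - (- a) = - (cs (- c) - a)" by (simp add: cs_minus)
  show ?thesis unfolding spec_iff e invertible_neg ..
qed

lemma spec_scale: assumes "d \<noteq> 0" shows "c \<in> spectrum (cs d * a) \<longleftrightarrow> c / d \<in> spectrum a"
proof -
  have "cs d * (cs (c / d) - a) = cs (d * (c / d)) - cs d * a"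
    by (simp only: right_diff_distrib cs_mult)
  moreover have "d * (c / d) = c" using assms by simp
  ultimately have "cs c - cs d * a = cs d * (cs (c / d) - a)" by simp
  thus ?thesis by (simp add: spec_iff invertible_cs_mult[OF assms])
qed

lemma selfadjoint_real_spec:
  assumes sa: "adj a = a" and c: "c \<in> spectrum a"
  shows "Im c = 0"
proof (rule ccontr)
  assume ne: "Im c \<noteq> 0"
  have key: "2 * t * Im c \<le> norm a ^ 2" for t :: real
  proof -
    let ?b = "a + cs (\<i> * complex_of_real t)"
    have "c + \<i> * complex_of_real t \<in> spectrum ?b" using c by (simp add: spec_shift)
    hence "cmod (c + \<i> * complex_of_real t) \<le> norm ?b" by (rule spec_bound)
    hence 1: "cmod (c + \<i> * complex_of_real t) ^ 2 \<le> norm ?b ^ 2"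
      by (simp add: power_mono)
    have "adj ?b = a - cs (\<i> * complex_of_real t)" by (simp add: adj_add adj_cs sa cs_minus)
    have "(a - cs (\<i> * complex_of_real t)) * ?b = a * a + (a * cs (\<i> * complex_of_real t) - cs (\<i> * complex_of_real t) * a)
       - cs (\<i> * complex_of_real t) * cs (\<i> * complex_of_real t)"
      by (simp add: ring_distribs)
    also have "\<dots> = a * a + cs (complex_of_real (t^2))"
      by (simp add: cs_comm[of _ a] cs_mult[symmetric] power2_eq_square cs_minus[symmetric])
        (simp add: algebra_simps)
    finally have "adj ?b * ?b = a * a + cs (complex_of_real (t^2))" using \<open>adj ?b = _\<close> by simp
    hence "norm ?b ^ 2 = norm (a * a + cs (complex_of_real (t^2)))"
      using cstar_identity[of ?b] by (simp add: power2_eq_square)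
    also have "\<dots> \<le> norm a ^ 2 + t ^ 2"
      using norm_triangle_ineq[of "a*a" "cs (complex_of_real (t^2))"] norm_mult_ineq[of a a]
      by (simp add: norm_cs power2_eq_square norm_mult abs_mult_self_eq)
    finally have 2: "norm ?b ^ 2 \<le> norm a ^ 2 + t ^ 2" .
    have "cmod (c + \<i> * complex_of_real t) ^ 2 = Re c ^ 2 + (Im c + t) ^ 2"
      by (simp add: cmod_power2)
    hence "Re c ^ 2 + (Im c + t) ^ 2 \<le> norm a ^ 2 + t ^ 2" using 1 2 by simp
    hence "Re c ^ 2 + Im c ^ 2 + 2 * t * Im c + t^2 \<le> norm a ^ 2 + t ^ 2"
      by (simp add: power2_sum algebra_simps)
    thus ?thesis using zero_le_power2[of "Re c"] zero_le_power2[of "Im c"] by linarith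
  qed
  define t where "t = (norm a ^ 2 + 1) / (2 * Im c)"
  have "2 * t * Im c = norm a ^ 2 + 1" using ne by (simp add: t_def)
  thus False using key[of t] by simp
qed

lemma geom_comm: "u * (\<Sum>m<n. u^m) = (\<Sum>m<n. u^m) * (u::'a::ring_1)"
  by (simp add: sum_distrib_left sum_distrib_right power_commutes)

lemma geom_ring1:
  fixes u :: "'a::ring_1"
  shows "(1 - u) * (\<Sum>m<n. u^m) = 1 - u^n"
proof (induct n)
  case (Suc n)
  have "(1 - u) * (\<Sum>m<Suc n. u^m) = (1 - u) * (\<Sum>m<n. u^m) + (1 - u) * u^n"
    by (simp add: distrib_left)
  also have "\<dots> = 1 - u^n + (u^n - u^Suc n)" by (subst Suc) (simp add: left_diff_distrib)
  finally show ?case by simp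
qed simp

lemma geom_ring:
  fixes u :: "'a::ring_1"
  shows "(1 - u) * (\<Sum>m<n. u^m) = 1 - u^n" "(\<Sum>m<n. u^m) * (1 - u) = 1 - u^n"
proof -
  show 1: "(1 - u) * (\<Sum>m<n. u^m) = 1 - u^n" by (rule geom_ring1)
  have "(\<Sum>m<n. u^m) * (1 - u) = (1 - u) * (\<Sum>m<n. u^m)"
    by (simp add: left_diff_distrib right_diff_distrib geom_comm)
  thus "(\<Sum>m<n. u^m) * (1 - u) = 1 - u^n" using 1 by simp
qed

lemma cs_mult_power: "(cs c * y) ^ n = cs (c ^ n) * (y ^ n :: 'a::cstar_algebra)"
proof (induct n)
  case (Suc n)
  have "(cs c * y) ^ Suc n = cs c * y * (cs (c ^ n) * y ^ n)" by (simp add: Suc power_Suc2)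
  also have "\<dots> = cs c * (y * (cs (c ^ n) * y ^ n))" by (simp add: mult.assoc)
  also have "y * (cs (c ^ n) * y ^ n) = cs (c ^ n) * (y * y ^ n)"
    by (simp add: mult.assoc[symmetric] cs_comm[of "c^n" y])
  also have "cs c * (cs (c ^ n) * (y * y ^ n)) = cs c * cs (c ^ n) * (y * y ^ n)"
    by (simp add: mult.assoc)
  finally show ?case by (simp add: cs_mult[symmetric] power_Suc)
qed simp

lemma cis_ne_1: assumes "0 < t" "t < 2 * pi" shows "cis t \<noteq> 1"
proof
  assume "cis t = 1"
  hence "Re (cis t) = 1" by simp
  hence "cos t = 1" by simp
  then obtain n :: int where n: "t = of_int n * 2 * pi" unfolding cos_one_2pi_int by blast
  have a: "0 < real_of_int n * (2*pi)" "real_of_int n * (2*pi) < 1 * (2*pi)"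
    using assms n by (simp_all add: mult.assoc)
  have "0 < real_of_int n" using a(1) pi_gt_zero by (simp add: zero_less_mult_iff)
  moreover have "real_of_int n < 1" using a(2) pi_gt_zero by (simp only: mult_less_cancel_right)
  ultimately have "0 < n" "n < 1" by simp_all
  thus False by simp
qed

lemma root_sum:
  fixes N m :: nat
  assumes "0 < m" "m < N"
  shows "(\<Sum>j<N. cis (2 * pi / N) ^ (j * m)) = 0"
proof -
  let ?w = "cis (2 * pi / N) ^ m"
  have e: "cis (2 * pi / N) ^ (j * m) = ?w ^ j" for j by (simp add: power_mult[symmetric] mult.commute)
  have "?w = cis (real m * (2 * pi / real N))" by (rule Complex.DeMoivre)
  also have "\<dots> = cis (2 * pi * m / N)" by (rule arg_cong[where f=cis]) simp
  finally have w: "?w = cis (2 * pi * m / N)" .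
  have "0 < 2 * pi * m / N" using assms by simp
  moreover have "2 * pi * m / N < 2 * pi" using assms by (simp add: divide_simps)
  ultimately have ne: "?w \<noteq> 1" unfolding w by (rule cis_ne_1)
  have "?w ^ N = cis (2 * pi * m / N) ^ N" using w by simp
  also have "\<dots> = cis (real N * (2 * pi * m / N))" by (rule Complex.DeMoivre)
  also have "\<dots> = cis (2 * pi * real m)" using assms by (intro arg_cong[where f=cis]) simp
  also have "\<dots> = 1" by (rule cis_multiple_2pi) simp
  finally have wN: "?w ^ N = 1" .
  have "(?w - 1) * (\<Sum>j<N. ?w ^ j) = 0" using power_diff_1_eq[of ?w N] wN by simp
  hence "(\<Sum>j<N. ?w ^ j) = 0" using ne by simp
  thus ?thesis using e by simp
qed

lemma cmod_1_cis: "cmod (1 - cis t) \<le> \<bar>t\<bar>"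
proof -
  have "cmod (1 - cis t) ^ 2 = Re (1 - cis t) ^ 2 + Im (1 - cis t) ^ 2" by (rule cmod_power2)
  also have "\<dots> = (1 - cos t)^2 + (sin t)^2" by simp
  also have "\<dots> = 2 - 2 * cos t" using sin_cos_squared_add[of t] by (simp add: power2_diff)
  also have "cos t = 1 - 2 * (sin (t/2))^2" using cos_double_sin[of "t/2"] by simp
  also have "2 - 2 * (1 - 2 * (sin (t/2))^2) = 4 * (sin (t/2))^2" by simp
  also have "\<dots> \<le> 4 * (t/2)^2"
  proof -
    have "\<bar>sin (t/2)\<bar> \<le> \<bar>t/2\<bar>" by (rule abs_sin_x_le_abs_x)
    hence "(sin (t/2))^2 \<le> (t/2)^2" by (simp only: abs_le_square_iff)
    thus ?thesis by simp
  qed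
  also have "\<dots> = \<bar>t\<bar>^2" by (simp add: power2_eq_square)
  finally have "cmod (1 - cis t) ^ 2 \<le> \<bar>t\<bar>^2" .
  thus ?thesis by (rule power2_le_imp_le) simp
qed

lemma norm_sa_pow2:
  fixes x :: "'a::cstar_algebra"
  assumes "adj x = x" shows "norm (x ^ (2 ^ k)) = norm x ^ (2 ^ k)"
proof (induct k)
  case (Suc k)
  have "x ^ (2 ^ Suc k) = adj (x ^ (2 ^ k)) * x ^ (2 ^ k)"
    by (simp add: adj_power assms power_add[symmetric] mult_2)
  hence "norm (x ^ (2 ^ Suc k)) = norm (x ^ (2 ^ k)) * norm (x ^ (2 ^ k))"
    by (simp add: cstar_identity)
  thus ?case by (simp add: Suc power_add mult_2)
qed simp

lemma avg_inverse:
  fixes y :: "'a::cstar_algebra" and \<omega> :: complex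
  assumes N: "N > 0" and om: "\<omega> ^ N = 1"
    and orth: "\<And>m. 0 < m \<Longrightarrow> m < N \<Longrightarrow> (\<Sum>j<N. \<omega> ^ (j * m)) = 0"
    and inv: "\<And>j. j < N \<Longrightarrow> invertible_el (1 - cs (\<omega> ^ j) * y)"
  defines "S \<equiv> cs (1 / of_nat N) * (\<Sum>j<N. inv_el (1 - cs (\<omega> ^ j) * y))"
  shows "(1 - y ^ N) * S = 1" "S * (1 - y ^ N) = 1"
proof -
  have each: "(1 - y ^ N) * inv_el (1 - cs (\<omega> ^ j) * y) = (\<Sum>m<N. cs (\<omega> ^ (j * m)) * y ^ m)"
    "inv_el (1 - cs (\<omega> ^ j) * y) * (1 - y ^ N) = (\<Sum>m<N. cs (\<omega> ^ (j * m)) * y ^ m)"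
    if j: "j < N" for j
  proof -
    let ?u = "cs (\<omega> ^ j) * y"
    have uN: "?u ^ N = y ^ N"
      by (simp add: cs_mult_power power_mult[symmetric] mult.commute[of j N] power_mult om)
    have um: "?u ^ m = cs (\<omega> ^ (j * m)) * y ^ m" for m
      by (simp add: cs_mult_power power_mult)
    note I = inv_el[OF inv[OF j]]
    have "(\<Sum>m<N. ?u ^ m) = inv_el (1 - ?u) * ((1 - ?u) * (\<Sum>m<N. ?u ^ m))"
      by (simp add: mult.assoc[symmetric] I)
    also have "\<dots> = inv_el (1 - ?u) * (1 - y ^ N)" by (simp add: geom_ring uN)
    finally have A: "(\<Sum>m<N. ?u ^ m) = inv_el (1 - ?u) * (1 - y ^ N)" .
    have "(\<Sum>m<N. ?u ^ m) = ((\<Sum>m<N. ?u ^ m) * (1 - ?u)) * inv_el (1 - ?u)"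
      by (simp add: mult.assoc I)
    also have "\<dots> = (1 - y ^ N) * inv_el (1 - ?u)" by (simp add: geom_ring uN)
    finally have B: "(\<Sum>m<N. ?u ^ m) = (1 - y ^ N) * inv_el (1 - ?u)" .
    show "(1 - y ^ N) * inv_el (1 - ?u) = (\<Sum>m<N. cs (\<omega> ^ (j * m)) * y ^ m)"
      using B um by simp
    show "inv_el (1 - ?u) * (1 - y ^ N) = (\<Sum>m<N. cs (\<omega> ^ (j * m)) * y ^ m)"
      using A um by simp
  qed
  have tot: "(\<Sum>j<N. \<Sum>m<N. cs (\<omega> ^ (j * m)) * y ^ m) = of_nat N"
  proof -
    have "(\<Sum>j<N. \<Sum>m<N. cs (\<omega> ^ (j * m)) * y ^ m) = (\<Sum>m<N. \<Sum>j<N. cs (\<omega> ^ (j * m)) * y ^ m)"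
      by (rule sum.swap)
    also have "\<dots> = (\<Sum>m<N. cs (\<Sum>j<N. \<omega> ^ (j * m)) * y ^ m)"
      by (simp add: cs_sum sum_distrib_right)
    also have "\<dots> = (\<Sum>m<N. if m = 0 then of_nat N else 0)"
    proof (rule sum.cong)
      fix m assume "m \<in> {..<N}"
      thus "cs (\<Sum>j<N. \<omega> ^ (j * m)) * y ^ m = (if m = 0 then of_nat N else 0)"
        using orth[of m] by (cases "m = 0") (simp_all add: cs_of_real[of "real N", simplified])
    qed simp
    also have "\<dots> = of_nat N" using N by (simp add: sum.delta)
    finally show ?thesis .
  qed
  have Nc: "cs (1 / of_nat N) * (of_nat N :: 'a) = 1"
    using N cs_of_real[of "real N", where 'a='a] cs_mult[of "1 / of_nat N" "of_nat N", where 'a='a]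
    by simp
  have "(1 - y ^ N) * S = cs (1 / of_nat N) * (\<Sum>j<N. (1 - y ^ N) * inv_el (1 - cs (\<omega> ^ j) * y))"
    unfolding S_def by (simp add: mult.assoc[symmetric] cs_comm[of _ "1 - y ^ N"] sum_distrib_left)
  also have "\<dots> = 1" using each(1) tot Nc by simp
  finally show "(1 - y ^ N) * S = 1" .
  have "S * (1 - y ^ N) = cs (1 / of_nat N) * (\<Sum>j<N. inv_el (1 - cs (\<omega> ^ j) * y) * (1 - y ^ N))"
    unfolding S_def by (simp add: mult.assoc sum_distrib_right)
  also have "\<dots> = 1" using each(2) tot Nc by simp
  finally show "S * (1 - y ^ N) = 1" .
qed

lemma resolvent_diff:
  fixes a b :: "'a::cstar_algebra"
  assumes "invertible_el a" "invertible_el b"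
  shows "inv_el a - inv_el b = inv_el a * (b - a) * inv_el b"
proof -
  have "inv_el a * (b - a) * inv_el b = inv_el a * (b * inv_el b) - (inv_el a * a) * inv_el b"
    by (simp add: algebra_simps)
  thus ?thesis using inv_el[OF assms(1)] inv_el[OF assms(2)] by simp
qed

lemma res_cont:
  fixes x :: "'a::cstar_algebra"
  assumes n1: "norm x = 1" and inv: "\<And>z. cmod z = 1 \<Longrightarrow> invertible_el (1 - cs z * x)"
  shows "continuous_on (sphere 0 1) (\<lambda>z. inv_el (1 - cs z * x))"
  unfolding continuous_on_iff
proof (intro ballI allI impI)
  fix z0 :: complex and e :: real
  assume z0: "z0 \<in> sphere 0 1" and e: "0 < e"
  let ?R = "\<lambda>z. inv_el (1 - cs z * x)"
  define K where "K = norm (?R z0) + 1"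
  have K: "0 < K" "norm (?R z0) \<le> K" by (simp_all add: K_def add_nonneg_pos)
  define d where "d = min (1 / (2 * K)) (e / (2 * K * K))"
  have d: "0 < d" using K e by (simp add: d_def)
  show "\<exists>d>0. \<forall>z\<in>sphere 0 1. dist z z0 < d \<longrightarrow> dist (?R z) (?R z0) < e"
  proof (intro exI conjI ballI impI)
    show "0 < d" by (rule d)
    fix z assume z: "z \<in> sphere 0 1" and dz: "dist z z0 < d"
    let ?a = "1 - cs z0 * x" and ?h = "cs (z - z0) * x"
    have ia: "invertible_el ?a" using inv z0 by simp
    have iz: "invertible_el (1 - cs z * x)" using inv z by simp
    have nh: "norm ?h \<le> cmod (z - z0)" using norm_mult_ineq[of "cs (z - z0)" x] n1 by (simp add: norm_cs)
    have czd: "cmod (z - z0) < d" using dz by (simp add: dist_norm)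
    have "norm (?R z0) * norm ?h \<le> K * cmod (z - z0)"
      using K nh by (intro mult_mono) auto
    also have "\<dots> \<le> K * d" using czd K by simp
    also have "\<dots> \<le> 1/2" using K by (simp add: d_def min_def field_simps)
    finally have sm: "norm (?R z0) * norm ?h \<le> 1/2" .
    have eq: "?a - ?h = 1 - cs z * x" by (simp add: cs_diff algebra_simps)
    have "norm (inv_el (?a - ?h)) \<le> norm (?R z0) / (1 - norm (?R z0) * norm ?h)"
      using perturb(2)[OF ia] sm by simp
    also have "\<dots> \<le> norm (?R z0) / (1/2)"
      using sm by (intro divide_left_mono) auto
    finally have nRz: "norm (?R z) \<le> 2 * K" using eq K by simp
    have "?R z - ?R z0 = ?R z * (?a - (1 - cs z * x)) * ?R z0"
      by (rule resolvent_diff[OF iz ia])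
    also have "?a - (1 - cs z * x) = ?h" by (simp add: cs_diff algebra_simps)
    finally have "norm (?R z - ?R z0) = norm (?R z * ?h * ?R z0)" by simp
    also have "\<dots> \<le> norm (?R z * ?h) * norm (?R z0)" by (rule norm_mult_ineq)
    also have "\<dots> \<le> norm (?R z) * norm ?h * norm (?R z0)"
      by (intro mult_right_mono norm_mult_ineq norm_ge_zero)
    also have "\<dots> \<le> (2 * K) * cmod (z - z0) * K"
      using nRz nh K by (intro mult_mono) auto
    also have "\<dots> < (2 * K) * d * K" using czd K by simp
    also have "\<dots> \<le> e" using K e by (simp add: d_def min_def field_simps)
    finally show "dist (?R z) (?R z0) < e" by (simp add: dist_norm)
  qed
qed


lemma res_bound:
  fixes x :: "'a::cstar_algebra"
  assumes n1: "norm x = 1" and inv: "\<And>z. cmod z = 1 \<Longrightarrow> invertible_el (1 - cs z * x)"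
  shows "\<exists>M>0. \<forall>z. cmod z = 1 \<longrightarrow> norm (inv_el (1 - cs z * x)) \<le> M"
proof -
  have c: "continuous_on (sphere 0 1) (\<lambda>z. inv_el (1 - cs z * x))"
    by (rule res_cont) (use n1 inv in auto)
  have "compact ((\<lambda>z. inv_el (1 - cs z * x)) ` sphere 0 1)"
    by (rule compact_continuous_image[OF c compact_sphere])
  hence "bounded ((\<lambda>z. inv_el (1 - cs z * x)) ` sphere 0 1)" by (rule compact_imp_bounded)
  then obtain M where "M > 0" "\<forall>y\<in>(\<lambda>z. inv_el (1 - cs z * x)) ` sphere 0 1. norm y \<le> M"
    unfolding bounded_pos by blast
  thus ?thesis by auto
qed

lemma SR0:
  fixes x :: "'a::cstar_algebra"
  assumes sa: "adj x = x" and n1: "norm x = 1"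
  shows "\<exists>z. cmod z = 1 \<and> \<not> invertible_el (1 - cs z * x)"
proof (rule ccontr)
  assume "\<not> ?thesis"
  hence inv: "\<And>z. cmod z = 1 \<Longrightarrow> invertible_el (1 - cs z * x)" by auto
  define R where "R z = inv_el (1 - cs z * x)" for z
  obtain M where M: "M > 0" "\<And>z. cmod z = 1 \<Longrightarrow> norm (R z) \<le> M"
    using res_bound[OF n1 inv] unfolding R_def by auto
  have lip: "norm (R z - R w) \<le> M * M * cmod (z - w)" if z: "cmod z = 1" and w: "cmod w = 1" for z w
  proof -
    have "R z - R w = R z * ((1 - cs w * x) - (1 - cs z * x)) * R w"
      unfolding R_def by (rule resolvent_diff[OF inv[OF z] inv[OF w]])
    also have "(1 - cs w * x) - (1 - cs z * x) = cs (z - w) * x" by (simp add: cs_diff algebra_simps)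
    finally have "norm (R z - R w) = norm (R z * (cs (z - w) * x) * R w)" by simp
    also have "\<dots> \<le> norm (R z * (cs (z - w) * x)) * norm (R w)" by (rule norm_mult_ineq)
    also have "\<dots> \<le> norm (R z) * norm (cs (z - w) * x) * norm (R w)"
      by (intro mult_right_mono norm_mult_ineq norm_ge_zero)
    also have "\<dots> \<le> M * cmod (z - w) * M"
    proof (intro mult_mono)
      show "norm (cs (z - w) * x) \<le> cmod (z - w)"
        using norm_mult_ineq[of "cs (z - w)" x] n1 by (simp add: norm_cs)
    qed (use M z w in auto)
    finally show ?thesis by (simp add: algebra_simps)
  qed
  obtain k where k: "8 * M * M < 2 ^ k" using real_arch_pow[of 2 "8 * M * M"] by auto
  define N :: nat where "N = 2 ^ k"
  have N0: "N > 0" by (simp add: N_def)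
  have NM: "8 * M * M < real N" using k by (simp add: N_def)
  define \<omega> where "\<omega> = cis (2 * pi / N)"
  define \<eta> where "\<eta> = cis (pi / N)"
  have "\<omega> ^ N = cis (real N * (2 * pi / N))" unfolding \<omega>_def by (rule Complex.DeMoivre)
  also have "\<dots> = cis (2 * pi)" using N0 by (intro arg_cong[where f=cis]) simp
  finally have omN: "\<omega> ^ N = 1" by simp
  have orth: "\<And>m. 0 < m \<Longrightarrow> m < N \<Longrightarrow> (\<Sum>j<N. \<omega> ^ (j * m)) = 0"
    unfolding \<omega>_def by (rule root_sum)
  have "\<eta> ^ N = cis (real N * (pi / N))" unfolding \<eta>_def by (rule Complex.DeMoivre)
  also have "\<dots> = cis pi" using N0 by (intro arg_cong[where f=cis]) simp
  finally have etaN: "\<eta> ^ N = -1" by simp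
  have nom: "cmod (\<omega> ^ j) = 1" for j by (simp add: \<omega>_def norm_power)
  have neta: "cmod \<eta> = 1" by (simp add: \<eta>_def)
  define A where "A = cs (1 / of_nat N) * (\<Sum>j<N. inv_el (1 - cs (\<omega> ^ j) * x))"
  define B where "B = cs (1 / of_nat N) * (\<Sum>j<N. inv_el (1 - cs (\<omega> ^ j) * (cs \<eta> * x)))"
  have invA: "invertible_el (1 - cs (\<omega> ^ j) * x)" for j using inv nom by auto
  have e1: "cs (\<omega> ^ j) * (cs \<eta> * x) = cs (\<omega> ^ j * \<eta>) * x" for j
    by (simp add: cs_mult mult.assoc)
  have invB: "invertible_el (1 - cs (\<omega> ^ j) * (cs \<eta> * x))" for j
    unfolding e1 using inv nom neta by (simp add: norm_mult)
  note AA = avg_inverse[OF N0 omN orth invA, folded A_def]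
  note BB = avg_inverse[OF N0 omN orth invB, folded B_def]
  have yN: "(cs \<eta> * x) ^ N = - (x ^ N)" by (simp add: cs_mult_power etaN cs_minus)
  have A1: "(1 - x ^ N) * A = 1" "A * (1 - x ^ N) = 1" using AA by auto
  have B1: "(1 + x ^ N) * B = 1" "B * (1 + x ^ N) = 1" using BB yN by auto
  have AB: "norm (A - B) \<le> M * M * (pi / N)"
  proof -
    have "A - B = cs (1 / of_nat N) * (\<Sum>j<N. R (\<omega> ^ j) - R (\<omega> ^ j * \<eta>))"
      unfolding A_def B_def R_def e1 by (simp add: right_diff_distrib sum_subtractf)
    hence "norm (A - B) \<le> (1 / N) * norm (\<Sum>j<N. R (\<omega> ^ j) - R (\<omega> ^ j * \<eta>))"
      using norm_mult_ineq[of "cs (1 / of_nat N)"] by (simp add: norm_cs norm_divide)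
    also have "norm (\<Sum>j<N. R (\<omega> ^ j) - R (\<omega> ^ j * \<eta>)) \<le> (\<Sum>j<N. norm (R (\<omega> ^ j) - R (\<omega> ^ j * \<eta>)))"
      by (rule norm_sum)
    also have "\<dots> \<le> of_nat (card {..<N}) * (M * M * (pi / N))"
    proof (rule sum_bounded_above)
      fix j assume "j \<in> {..<N}"
      have "norm (R (\<omega> ^ j) - R (\<omega> ^ j * \<eta>)) \<le> M * M * cmod (\<omega> ^ j - \<omega> ^ j * \<eta>)"
        by (rule lip) (simp_all add: nom neta norm_mult)
      also have "\<omega> ^ j - \<omega> ^ j * \<eta> = \<omega> ^ j * (1 - \<eta>)" by (simp add: right_diff_distrib)
      also have "cmod (\<omega> ^ j * (1 - \<eta>)) = cmod (1 - \<eta>)" by (simp add: norm_mult nom)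
      also have "\<dots> \<le> pi / N" using cmod_1_cis[of "pi / N"] by (simp add: \<eta>_def)
      finally show "norm (R (\<omega> ^ j) - R (\<omega> ^ j * \<eta>)) \<le> M * M * (pi / N)"
        using M by (simp add: mult_left_mono)
    qed
    finally show ?thesis using N0 by (simp add: divide_simps)
  qed
  define y where "y = x ^ N"
  have ny: "norm y \<le> 1" using norm_power_ineq[of x N] n1 by (simp add: y_def)
  have A1': "(1 - y) * A = 1" "A * (1 - y) = 1" using A1 by (simp_all add: y_def)
  have B1': "(1 + y) * B = 1" "B * (1 + y) = 1" using B1 by (simp_all add: y_def)
  have "invertible_el (1 - y)" using A1' invertible_el_def by blast
  moreover have "inv_el (1 - y) = A" by (rule inv_el_unique[OF A1'])
  moreover have "(1 - y) * y = y * (1 - y)" by (simp add: algebra_simps)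
  ultimately have Ac: "A * y = y * A" using inv_el_comm by metis
  have "A = A * ((1 + y) * B)" using B1' by simp
  also have "\<dots> = A * B + A * y * B" by (simp add: algebra_simps)
  finally have a1: "A = A * B + A * y * B" .
  have "B = (A * (1 - y)) * B" using A1' by simp
  also have "\<dots> = A * B - A * y * B" by (simp add: algebra_simps)
  finally have b1: "B = A * B - A * y * B" .
  define w where "w = y * (A * B)"
  have "A * y * B = w" unfolding w_def using Ac by (simp add: mult.assoc)
  hence diff: "A - B = w + w" using a1 b1 by (metis add_diff_cancel_left' diff_diff_eq2 diff_add_cancel)
  have "norm (A - B) = norm (2 *\<^sub>R w)" using diff by (simp add: scaleR_2)
  hence nw: "norm w = norm (A - B) / 2" by simp
  define U where "U = A * B"
  define V where "V = 1 - y * y"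
  have "V = (1 + y) * (1 - y)" by (simp add: V_def algebra_simps)
  hence "V * U = (1 + y) * ((1 - y) * A) * B" by (simp add: U_def mult.assoc)
  hence VU: "V * U = 1" using A1' B1' by simp
  hence "U - y * y * U = 1" by (simp add: V_def left_diff_distrib)
  hence "U - 1 = y * w" by (simp add: w_def U_def mult.assoc algebra_simps)
  hence "norm (U - 1) \<le> norm y * norm w" using norm_mult_ineq[of y w] by simp
  also have "\<dots> \<le> 1 * norm w" using ny by (intro mult_right_mono) auto
  also have "\<dots> \<le> M * M * (pi / N) / 2" using nw AB by simp
  also have "\<dots> < 1 / 4"
  proof -
    have "M * M * pi < M * M * 4" using M pi_less_4 by simp
    also have "\<dots> < real N / 2" using NM by simp
    finally show ?thesis using N0 by (simp add: divide_simps)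
  qed
  finally have eps: "norm (U - 1) < 1 / 4" .
  have "V - 1 = V * (1 - U)" using VU by (simp add: right_diff_distrib)
  hence "norm (V - 1) \<le> norm V * norm (1 - U)" using norm_mult_ineq by metis
  also have "norm V \<le> 1 + norm (V - 1)" using norm_triangle_ineq[of 1 "V - 1"] by simp
  hence "norm V * norm (1 - U) \<le> (1 + norm (V - 1)) * norm (1 - U)" by (intro mult_right_mono) auto
  also have "\<dots> \<le> (1 + norm (V - 1)) * (1 / 4)"
    using eps norm_minus_commute[of 1 U] by (intro mult_left_mono) auto
  finally have "norm (V - 1) \<le> (1 + norm (V - 1)) * (1 / 4)" .
  hence small: "norm (V - 1) < 1" by (simp add: algebra_simps)
  have "V - 1 = - (x ^ (2 ^ Suc k))" by (simp add: V_def y_def N_def power_add[symmetric] mult_2)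
  hence "norm (V - 1) = 1" using norm_sa_pow2[OF sa, of "Suc k"] n1 by simp
  thus False using small by simp
qed

lemma norm_cs_mult: "norm (cs c * x) = cmod c * norm (x::'a::cstar_algebra)"
  by (simp add: scaleC_eq_mult[symmetric] norm_scaleC)

lemma SR:
  fixes b :: "'a::cstar_algebra"
  assumes sa: "adj b = b" and r: "0 \<le> \<rho>" and sp: "\<And>c. c \<in> spectrum b \<Longrightarrow> cmod c \<le> \<rho>"
  shows "norm b \<le> \<rho>"
proof (rule ccontr)
  assume "\<not> norm b \<le> \<rho>"
  hence gt: "\<rho> < norm b" by simp
  hence nb: "norm b > 0" using r by linarith
  define d :: complex where "d = complex_of_real (1 / norm b)"
  have d0: "d \<noteq> 0" using nb by (simp add: d_def)
  define x where "x = cs d * b"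
  have sx: "adj x = x" by (simp add: x_def adj_mult adj_cs sa d_def cs_comm)
  have b0: "b \<noteq> 0"
  proof
    assume "b = 0" thus False using nb by simp
  qed
  have "cmod d = 1 / norm b" using nb by (simp add: d_def norm_divide)
  hence nx: "norm x = 1" using nb by (simp add: x_def norm_cs_mult)
  obtain z where z: "cmod z = 1" "\<not> invertible_el (1 - cs z * x)" using SR0[OF sx nx] by blast
  have z0: "z \<noteq> 0" using z by auto
  have "1 - cs z * x = cs z * (cs (inverse z) - x)"
    by (simp add: right_diff_distrib mult.assoc[symmetric] cs_mult[symmetric] z0)
  hence "\<not> invertible_el (cs (inverse z) - x)" using z(2) invertible_cs_mult[OF z0] by metis
  hence "inverse z \<in> spectrum (cs d * b)" by (simp add: spec_iff x_def)
  hence "inverse z / d \<in> spectrum b" using spec_scale[OF d0] by blast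
  hence "cmod (inverse z / d) \<le> \<rho>" by (rule sp)
  moreover have "cmod (inverse z / d) = norm b" using z nb by (simp add: d_def norm_divide norm_inverse norm_mult)
  ultimately show False using gt by simp
qed

lemma spec_real_sa: assumes "adj a = a" "c \<in> spectrum a" shows "c = complex_of_real (Re c)"
  using selfadjoint_real_spec[OF assms] by (simp add: complex_eq_iff)

lemma pos_iff: "positive a \<longleftrightarrow> adj a = a \<and> (\<forall>c\<in>spectrum a. 0 \<le> Re c)"
proof
  assume "positive a"
  thus "adj a = a \<and> (\<forall>c\<in>spectrum a. 0 \<le> Re c)" unfolding positive_def selfadjoint_def by auto
next
  assume A: "adj a = a \<and> (\<forall>c\<in>spectrum a. 0 \<le> Re c)"
  have "spectrum a \<subseteq> complex_of_real ` {0..}"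
  proof
    fix c assume c: "c \<in> spectrum a"
    hence "c = complex_of_real (Re c)" using spec_real_sa A by blast
    moreover have "Re c \<in> {0..}" using A c by auto
    ultimately show "c \<in> complex_of_real ` {0..}" by blast
  qed
  thus "positive a" using A unfolding positive_def selfadjoint_def by auto
qed

lemma pos_sa: "positive a \<Longrightarrow> adj a = a" by (simp add: pos_iff)

lemma spec_cs_minus: "c \<in> spectrum (cs t - a) \<longleftrightarrow> t - c \<in> spectrum a"
proof -
  have e: "cs c - (cs t - a) = - (cs (t - c) - a)" by (simp add: cs_diff)
  show ?thesis unfolding spec_iff e invertible_neg ..
qed

lemma pos_antisym:
  assumes "positive a" "positive (- a)" shows "a = 0"
proof -
  have sa: "adj a = a" using assms pos_sa by blast
  have "norm a \<le> 0"
  proof (rule SR[OF sa order_refl])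
    fix c assume c: "c \<in> spectrum a"
    have "-c \<in> spectrum (- a)" using c by (simp add: spec_neg)
    hence "0 \<le> Re (- c)" using assms(2) pos_iff by blast
    moreover have "0 \<le> Re c" using c assms(1) pos_iff by blast
    moreover have "c = complex_of_real (Re c)" using spec_real_sa[OF sa c] .
    ultimately have "c = 0" by (metis add.inverse_neutral antisym minus_complex.sel(1) neg_0_le_iff_le of_real_0 uminus_complex.sel(1))
    thus "cmod c \<le> 0" by simp
  qed
  thus ?thesis by simp
qed

lemma pos_normchar1:
  assumes sa: "adj a = a" and t: "norm (cs (complex_of_real t) - a) \<le> t"
  shows "positive a"
  unfolding pos_iff
proof (intro conjI ballI sa)
  fix c assume c: "c \<in> spectrum a"
  have "complex_of_real t - (complex_of_real t - c) = c" by simp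
  hence "complex_of_real t - c \<in> spectrum (cs (complex_of_real t) - a)" using c by (simp add: spec_cs_minus)
  hence "cmod (complex_of_real t - c) \<le> t" using spec_bound t by (meson order_trans)
  hence "\<bar>Re (complex_of_real t - c)\<bar> \<le> t" using abs_Re_le_cmod order_trans by blast
  thus "0 \<le> Re c" by simp
qed

lemma pos_normchar2:
  assumes p: "positive a" and t: "norm a \<le> t"
  shows "norm (cs (complex_of_real t) - a) \<le> t"
proof (rule SR)
  have sa: "adj a = a" using p pos_sa by blast
  show "adj (cs (complex_of_real t) - a) = cs (complex_of_real t) - a" by (simp add: adj_diff adj_cs sa)
  show "0 \<le> t" using t norm_ge_zero order_trans by blast
  fix c assume c: "c \<in> spectrum (cs (complex_of_real t) - a)"
  hence c': "complex_of_real t - c \<in> spectrum a" by (simp add: spec_cs_minus)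
  have r: "complex_of_real t - c = complex_of_real (Re (complex_of_real t - c))" by (rule spec_real_sa[OF sa c'])
  have "0 \<le> Re (complex_of_real t - c)" using p c' pos_iff by blast
  moreover have "cmod (complex_of_real t - c) \<le> t" using spec_bound[OF c'] t by simp
  ultimately have "0 \<le> t - Re c" "t - Re c \<le> t" "Im c = 0" using r abs_Re_le_cmod[of "complex_of_real t - c"]
    by (auto simp: complex_eq_iff)
  thus "cmod c \<le> t" by (simp add: cmod_def)
qed

lemma pos_add:
  assumes "positive a" "positive b" shows "positive (a + b)"
proof -
  have sa: "adj (a + b) = a + b" using assms pos_sa adj_add by metis
  have 1: "norm (cs (complex_of_real (norm a)) - a) \<le> norm a" by (rule pos_normchar2[OF assms(1) order_refl])
  have 2: "norm (cs (complex_of_real (norm b)) - b) \<le> norm b" by (rule pos_normchar2[OF assms(2) order_refl])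
  have e: "cs (complex_of_real (norm a + norm b)) - (a + b)
      = (cs (complex_of_real (norm a)) - a) + (cs (complex_of_real (norm b)) - b)"
    by (simp add: cs_add)
  have "norm (cs (complex_of_real (norm a + norm b)) - (a + b))
     \<le> norm (cs (complex_of_real (norm a)) - a) + norm (cs (complex_of_real (norm b)) - b)"
    unfolding e by (rule norm_triangle_ineq)
  hence "norm (cs (complex_of_real (norm a + norm b)) - (a + b)) \<le> norm a + norm b"
    using 1 2 by linarith
  thus ?thesis by (rule pos_normchar1[OF sa])
qed

lemma not_invertible_zero: "\<not> invertible_el (0::'a::cstar_algebra)"
  unfolding invertible_el_def by simp

lemma spec_zero: "c \<in> spectrum (0::'a::cstar_algebra) \<longleftrightarrow> c = 0"
  using invertible_cs[of c, where 'a='a] not_invertible_zero[where 'a='a] by (auto simp: spec_iff)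

lemma pos_zero: "positive (0::'a::cstar_algebra)"
  by (simp add: pos_iff spec_zero)

lemma pos_scale:
  assumes p: "positive a" and r: "0 \<le> r"
  shows "positive (cs (complex_of_real r) * a)"
proof (cases "r = 0")
  case True thus ?thesis by (simp add: pos_zero)
next
  case False
  hence r0: "complex_of_real r \<noteq> 0" by simp
  have sa: "adj a = a" using p pos_sa by blast
  show ?thesis unfolding pos_iff
  proof (intro conjI ballI)
    show "adj (cs (complex_of_real r) * a) = cs (complex_of_real r) * a"
      by (simp add: adj_mult adj_cs sa cs_comm)
    fix c assume "c \<in> spectrum (cs (complex_of_real r) * a)"
    hence "c / complex_of_real r \<in> spectrum a" using spec_scale[OF r0] by blast
    hence "0 \<le> Re (c / complex_of_real r)" using p pos_iff by blast
    thus "0 \<le> Re c" using r False by (simp add: Re_divide_of_real zero_le_divide_iff)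
  qed
qed

lemma spec_orth:
  fixes u v :: "'a::cstar_algebra"
  assumes uv: "u * v = 0" and vu: "v * u = 0" and c0: "c \<noteq> 0" and c: "c \<in> spectrum u"
  shows "c \<in> spectrum (u + v)"
proof (rule ccontr)
  assume "c \<notin> spectrum (u + v)"
  hence i: "invertible_el (cs c - (u + v))" by (simp add: spec_iff)
  let ?I = "inv_el (cs c - (u + v))"
  have f1: "(cs c - u) * (cs c - v) = cs c * (cs c - (u + v))"
    by (simp add: algebra_simps uv cs_comm[of c u])
  have f2: "(cs c - v) * (cs c - u) = cs c * (cs c - (u + v))"
    by (simp add: algebra_simps vu cs_comm[of c v])
  have ci: "cs c * cs (inverse c) = (1::'a)" "cs (inverse c) * cs c = (1::'a)"
    using c0 by (simp_all add: cs_mult[symmetric])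
  have "(cs c - u) * ((cs c - v) * ?I * cs (inverse c)) = cs c * ((cs c - (u + v)) * ?I) * cs (inverse c)"
    using f1 by (simp add: mult.assoc[symmetric])
  also have "\<dots> = 1" using inv_el[OF i] ci by (simp add: cs_comm[of c])
  finally have r: "(cs c - u) * ((cs c - v) * ?I * cs (inverse c)) = 1" .
  have "(cs (inverse c) * ?I * (cs c - v)) * (cs c - u) = cs (inverse c) * ?I * (cs c * (cs c - (u + v)))"
    using f2 by (simp add: mult.assoc)
  also have "\<dots> = cs (inverse c) * cs c * (?I * (cs c - (u + v)))"
    by (simp add: mult.assoc cs_comm[of c])
  also have "\<dots> = 1" using inv_el[OF i] ci by simp
  finally have l: "(cs (inverse c) * ?I * (cs c - v)) * (cs c - u) = 1" .
  have "invertible_el (cs c - u)" using invertible_lr[OF r l] .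
  thus False using c by (simp add: spec_iff)
qed

lemma pos_orth:
  fixes u v :: "'a::cstar_algebra"
  assumes p: "positive (u + v)" and uv: "u * v = 0" and vu: "v * u = 0" and sa: "adj u = u"
  shows "positive u"
  unfolding pos_iff
proof (intro conjI ballI sa)
  fix c assume c: "c \<in> spectrum u"
  show "0 \<le> Re c"
  proof (cases "c = 0")
    case False
    hence "c \<in> spectrum (u + v)" using spec_orth[OF uv vu False c] by simp
    thus ?thesis using p pos_iff by blast
  qed simp
qed

lemma spec_similar:
  fixes s a :: "'a::cstar_algebra"
  assumes ss: "s * s = 1"
  shows "c \<in> spectrum (s * a * s) \<longleftrightarrow> c \<in> spectrum a"
proof -
  have iS: "invertible_el s" using ss invertible_el_def by blast
  have e1: "s * (cs c - a) * s = s * cs c * s - s * a * s" by (simp add: algebra_simps)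
  have "s * cs c * s = (cs c * s) * s" by (simp only: cs_comm[of c s])
  hence "s * cs c * s = cs c * (s * s)" by (simp only: mult.assoc)
  hence e: "cs c - s * a * s = s * (cs c - a) * s" using e1 ss by simp
  have "invertible_el (s * (cs c - a) * s) \<longleftrightarrow> invertible_el (cs c - a)"
  proof
    assume "invertible_el (s * (cs c - a) * s)"
    hence "invertible_el (s * (s * (cs c - a) * s) * s)" using invertible_el_mult iS by blast
    moreover have "s * (s * (cs c - a) * s) * s = cs c - a" by (simp add: mult.assoc[symmetric] ss) (simp add: mult.assoc ss)
    ultimately show "invertible_el (cs c - a)" by simp
  next
    assume "invertible_el (cs c - a)"
    thus "invertible_el (s * (cs c - a) * s)" using invertible_el_mult iS by blast
  qed
  thus ?thesis by (simp add: spec_iff e)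
qed

lemma pos_half: "positive (x + x) \<Longrightarrow> positive (x::'a::cstar_algebra)"
proof -
  assume "positive (x + x)"
  hence "positive (cs (complex_of_real (1/2)) * (x + x))" by (rule pos_scale) simp
  moreover have "cs (complex_of_real (1/2)) * (x + x) = scaleR (1/2) (x + x)"
    by (simp only: cs_of_real scaleR_eq_mult)
  moreover have "scaleR (1/2) (x + x) = x" by (simp add: scaleR_2[symmetric])
  ultimately show ?thesis by simp
qed

lemma compress:
  fixes z e :: "'a::cstar_algebra"
  assumes p: "positive z" and e: "projection e"
  shows "positive (e * z * e)"
proof -
  have ee: "e * e = e" and ae: "adj e = e" using e by (auto simp: projection_def)
  have sz: "adj z = z" using p pos_sa by blast
  define f where "f = 1 - e"
  have ef: "e * f = 0" "f * e = 0" by (simp_all add: f_def algebra_simps ee)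
  define s where "s = e - f"
  have ss: "s * s = 1" by (simp add: s_def f_def algebra_simps ee)
  have as: "adj s = s" by (simp add: s_def f_def adj_diff ae)
  have p2: "positive (s * z * s)"
    unfolding pos_iff
  proof (intro conjI ballI)
    show "adj (s * z * s) = s * z * s" by (simp add: adj_mult as sz mult.assoc)
    fix c assume "c \<in> spectrum (s * z * s)"
    hence "c \<in> spectrum z" using spec_similar[OF ss] by blast
    thus "0 \<le> Re c" using p pos_iff by blast
  qed
  have "z + s * z * s = (e * z * e + f * z * f) + (e * z * e + f * z * f)"
  proof -
    have z: "z = (e + f) * z * (e + f)" by (simp add: f_def)
    show ?thesis unfolding s_def by (subst (1) z) (simp add: algebra_simps)
  qed
  hence "positive ((e * z * e + f * z * f) + (e * z * e + f * z * f))" using pos_add[OF p p2] by simp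
  hence pd: "positive (e * z * e + f * z * f)" by (rule pos_half)
  have "(e * z * e) * (f * z * f) = e * z * (e * f) * z * f" by (simp add: mult.assoc)
  hence o1: "(e * z * e) * (f * z * f) = 0" using ef by simp
  have "(f * z * f) * (e * z * e) = f * z * (f * e) * z * e" by (simp add: mult.assoc)
  hence o2: "(f * z * f) * (e * z * e) = 0" using ef by simp
  have "adj (e * z * e) = e * z * e" by (simp add: adj_mult ae sz mult.assoc)
  thus ?thesis using pos_orth[OF pd o1 o2] by blast
qed

lemma cs_left_commute: "cs c * (x * y) = x * (cs c * (y::'a::cstar_algebra))"
  by (simp add: mult.assoc[symmetric] cs_comm[of c x])

lemma jacobson:
  fixes a b :: "'a::cstar_algebra"
  assumes c0: "c \<noteq> 0" and i: "invertible_el (cs c - a * b)"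
  shows "invertible_el (cs c - b * a)"
proof -
  let ?I = "inv_el (cs c - a * b)"
  let ?X = "cs (inverse c) * (1 + b * ?I * a)"
  have ci: "cs (inverse c) * cs c = (1::'a)" using c0 by (simp add: cs_mult[symmetric])
  have "(cs c - b * a) * (1 + b * ?I * a) = cs c - b * a + (b * cs c - b * a * b) * ?I * a"
    by (simp add: algebra_simps cs_comm[of c b] cs_left_commute[of c b])
  also have "(b * cs c - b * a * b) = b * (cs c - a * b)" by (simp add: algebra_simps)
  also have "b * (cs c - a * b) * ?I * a = b * a" using inv_el(1)[OF i] by (simp add: mult.assoc)
  finally have r0: "(cs c - b * a) * (1 + b * ?I * a) = cs c" by simp
  have "(1 + b * ?I * a) * (cs c - b * a) = cs c - b * a + b * ?I * (a * cs c - a * b * a)"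
    by (simp add: algebra_simps cs_comm[of c a] cs_left_commute[of c a])
  also have "(a * cs c - a * b * a) = (cs c - a * b) * a" by (simp add: algebra_simps cs_comm[of c a])
  also have "b * ?I * ((cs c - a * b) * a) = b * (?I * (cs c - a * b)) * a" by (simp only: mult.assoc)
  also have "\<dots> = b * a" using inv_el(2)[OF i] by simp
  finally have l0: "(1 + b * ?I * a) * (cs c - b * a) = cs c" by simp
  have "(cs c - b * a) * ?X = cs (inverse c) * ((cs c - b * a) * (1 + b * ?I * a))"
    by (rule cs_left_commute[symmetric])
  hence r: "(cs c - b * a) * ?X = 1" using r0 ci by simp
  have l: "?X * (cs c - b * a) = 1"
    using l0 ci by (simp add: mult.assoc)
  show ?thesis using invertible_lr[OF r l] .
qed

lemma pos_ww:
  fixes w :: "'a::cstar_algebra"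
  assumes p: "positive (w * adj w)"
  shows "positive (adj w * w)"
  unfolding pos_iff
proof (intro conjI ballI)
  show "adj (adj w * w) = adj w * w" by (simp add: adj_mult adj_adj)
  fix c assume c: "c \<in> spectrum (adj w * w)"
  show "0 \<le> Re c"
  proof (cases "c = 0")
    case False
    have "c \<in> spectrum (w * adj w)"
      using c jacobson[OF False, of w "adj w"] by (auto simp: spec_iff)
    thus ?thesis using p pos_iff by blast
  qed simp
qed

lemma cs_mult_mult: "cs x * P * (cs u * Q) = cs (x * u) * (P * (Q::'a::cstar_algebra))"
proof -
  have "cs x * P * (cs u * Q) = cs x * (P * (cs u * Q))" by (simp only: mult.assoc)
  also have "P * (cs u * Q) = cs u * (P * Q)" by (rule cs_left_commute[symmetric])
  finally show ?thesis by (simp only: mult.assoc[symmetric] cs_mult)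
qed

lemma block_mult:
  fixes E F :: "'a::cstar_algebra"
  assumes "E * E = E" "F * F = F" "E * F = 0" "F * E = 0"
  shows "(cs x * F + cs y * E) * (cs u * F + cs v * E) = cs (x * u) * F + cs (y * v) * E"
proof -
  have "(cs x * F + cs y * E) * (cs u * F + cs v * E)
      = cs x * F * (cs u * F) + cs x * F * (cs v * E) + (cs y * E * (cs u * F) + cs y * E * (cs v * E))"
    by (simp only: distrib_left distrib_right add_ac)
  also have "\<dots> = cs (x * u) * F + cs (y * v) * E" by (simp only: cs_mult_mult assms) simp
  finally show ?thesis .
qed

lemma pos_proj_comb:
  fixes e :: "'a::cstar_algebra"
  assumes e: "projection e" and a: "0 \<le> \<alpha>" and ab: "0 \<le> \<alpha> + \<beta>"
  shows "positive (cs (complex_of_real \<alpha>) + cs (complex_of_real \<beta>) * e)"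
  unfolding pos_iff
proof (intro conjI ballI)
  have ee: "e * e = e" and ae: "adj e = e" using e by (auto simp: projection_def)
  define F where "F = 1 - e"
  have bm: "e * e = e" "F * F = F" "e * F = 0" "F * e = 0" by (simp_all add: F_def algebra_simps ee)
  show "adj (cs (complex_of_real \<alpha>) + cs (complex_of_real \<beta>) * e) = cs (complex_of_real \<alpha>) + cs (complex_of_real \<beta>) * e"
    by (simp add: adj_add adj_mult adj_cs ae cs_comm)
  fix c assume c: "c \<in> spectrum (cs (complex_of_real \<alpha>) + cs (complex_of_real \<beta>) * e)"
  have "c = complex_of_real \<alpha> \<or> c = complex_of_real (\<alpha> + \<beta>)"
  proof (rule ccontr)
    assume "\<not> ?thesis"
    hence n1: "c - complex_of_real \<alpha> \<noteq> 0" and n2: "c - complex_of_real \<alpha> - complex_of_real \<beta> \<noteq> 0"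
      by (auto simp: diff_diff_eq)
    define g where "g = c - complex_of_real \<alpha>"
    define b where "b = complex_of_real \<beta>"
    define P where "P = cs (inverse g) * F + cs (inverse (g - b)) * e"
    have g0: "g \<noteq> 0" "g - b \<noteq> 0" using n1 n2 by (simp_all add: g_def b_def)
    have "cs g - cs b * e = cs g * (F + e) - cs b * e" by (simp add: F_def)
    also have "\<dots> = cs g * F + cs (g - b) * e" by (simp add: algebra_simps cs_diff)
    finally have eq0: "cs g - cs b * e = cs g * F + cs (g - b) * e" .
    have eq: "cs c - (cs (complex_of_real \<alpha>) + cs (complex_of_real \<beta>) * e) = cs g * F + cs (g - b) * e"
      unfolding eq0[symmetric] by (simp add: g_def b_def cs_diff)
    have r: "(cs g * F + cs (g - b) * e) * P = 1"
      unfolding P_def block_mult[OF bm] using g0 by (simp add: F_def)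
    have l: "P * (cs g * F + cs (g - b) * e) = 1"
      unfolding P_def block_mult[OF bm] using g0 by (simp add: F_def)
    have "invertible_el (cs g * F + cs (g - b) * e)" by (rule invertible_lr[OF r l])
    thus False using c eq by (simp add: spec_iff)
  qed
  thus "0 \<le> Re c" using a ab by auto
qed


lemma spec_quad:
  fixes a :: "'a::cstar_algebra"
  assumes c: "c \<in> spectrum (a * a + cs p * a)"
  shows "\<exists>r. r \<in> spectrum a \<and> c = r * r + p * r"
proof -
  define s where "s = csqrt (p * p + 4 * c)"
  have ss: "s * s = p * p + 4 * c" using power2_csqrt[of "p * p + 4 * c"] by (simp add: s_def power2_eq_square)
  define r1 where "r1 = (s - p) / 2"
  define r2 where "r2 = (- s - p) / 2"
  have sum: "r1 + r2 = - p" by (simp add: r1_def r2_def field_simps)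
  have prod: "r1 * r2 = - c" using ss by (simp add: r1_def r2_def field_simps)
  have q1: "c = r1 * r1 + p * r1" using ss by (simp add: r1_def field_simps)
  have q2: "c = r2 * r2 + p * r2" using ss by (simp add: r2_def field_simps)
  have "(a - cs r1) * (a - cs r2) = a * a - (cs r1 * a + cs r2 * a) + cs (r1 * r2)"
    by (simp add: algebra_simps cs_comm[of _ a] cs_mult)
  also have "cs r1 * a + cs r2 * a = - (cs p * a)" using sum
    by (simp add: distrib_right[symmetric] cs_add[symmetric] cs_minus)
  finally have f: "(a - cs r1) * (a - cs r2) = - (cs c - (a * a + cs p * a))"
    using prod by (simp add: cs_minus)
  have "\<not> (invertible_el (a - cs r1) \<and> invertible_el (a - cs r2))"
  proof
    assume "invertible_el (a - cs r1) \<and> invertible_el (a - cs r2)"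
    hence "invertible_el (- (cs c - (a * a + cs p * a)))" using invertible_el_mult f by metis
    thus False using c unfolding spec_iff invertible_neg by simp
  qed
  hence "r1 \<in> spectrum a \<or> r2 \<in> spectrum a"
    using invertible_neg[of "cs r1 - a"] invertible_neg[of "cs r2 - a"] by (auto simp: spec_iff)
  thus ?thesis using q1 q2 by blast
qed

lemma pos_sq:
  fixes y :: "'a::cstar_algebra"
  assumes sa: "adj y = y" shows "positive (y * y)"
  unfolding pos_iff
proof (intro conjI ballI)
  show "adj (y * y) = y * y" by (simp add: adj_mult sa)
  fix c assume "c \<in> spectrum (y * y)"
  hence "c \<in> spectrum (y * y + cs 0 * y)" by simp
  then obtain r where r: "r \<in> spectrum y" "c = r * r + 0 * r" using spec_quad by blast
  have "r = complex_of_real (Re r)" by (rule spec_real_sa[OF sa r(1)])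
  hence "c = complex_of_real (Re r * Re r)" using r(2) by (metis add_0_right mult_zero_left of_real_mult)
  thus "0 \<le> Re c" by simp
qed

lemma spec_unit:
  assumes p: "positive y" and p1: "positive (1 - y)" and r: "r \<in> spectrum y"
  shows "r = complex_of_real (Re r)" "0 \<le> Re r" "Re r \<le> 1"
proof -
  show "r = complex_of_real (Re r)" using spec_real_sa[OF pos_sa[OF p] r] .
  show "0 \<le> Re r" using p r pos_iff by blast
  have "1 - (1 - r) = r" by simp
  hence "1 - r \<in> spectrum (cs 1 - y)" using r by (simp only: spec_cs_minus)
  hence "1 - r \<in> spectrum (1 - y)" by simp
  hence "0 \<le> Re (1 - r)" using p1 pos_iff by blast
  thus "Re r \<le> 1" by simp
qed

lemma pos_y_minus_sq:
  fixes y :: "'a::cstar_algebra"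
  assumes p: "positive y" and p1: "positive (1 - y)"
  shows "positive (y - y * y)"
  unfolding pos_iff
proof (intro conjI ballI)
  have sa: "adj y = y" using p pos_sa by blast
  show "adj (y - y * y) = y - y * y" by (simp add: adj_diff adj_mult sa)
  fix c assume "c \<in> spectrum (y - y * y)"
  hence "- c \<in> spectrum (- (y - y * y))" by (simp only: spec_neg minus_minus)
  moreover have "- (y - y * y) = y * y + cs (- 1) * y" by (simp add: cs_minus)
  ultimately have "- c \<in> spectrum (y * y + cs (- 1) * y)" by (simp only:)
  then obtain r where r: "r \<in> spectrum y" "- c = r * r + (- 1) * r" using spec_quad by blast
  note u = spec_unit[OF p p1 r(1)]
  have "c = r - r * r" using r(2) by (simp add: algebra_simps)
  hence "Re c = Re r - Re r * Re r" using u(1) by (metis Re_complex_of_real of_real_diff of_real_mult)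
  also have "\<dots> = Re r * (1 - Re r)" by (simp add: algebra_simps)
  finally show "0 \<le> Re c" using u(2,3) by simp
qed

lemma cs_real_mult: "cs (complex_of_real r) * x = scaleR r (x::'a::cstar_algebra)"
  by (simp add: cs_of_real scaleR_eq_mult)

lemma cs_real: "cs (complex_of_real r) = scaleR r (1::'a::cstar_algebra)"
  using cs_real_mult[of r "1::'a"] by simp

lemma pos_proj_combR:
  fixes e :: "'a::cstar_algebra"
  assumes "projection e" "0 \<le> \<alpha>" "0 \<le> \<alpha> + \<beta>"
  shows "positive (scaleR \<alpha> 1 + scaleR \<beta> e)"
  using pos_proj_comb[OF assms] by (simp add: cs_real cs_real_mult)

lemma pos_scaleR: "positive a \<Longrightarrow> 0 \<le> r \<Longrightarrow> positive (scaleR r (a::'a::cstar_algebra))"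
  using pos_scale[of a r] by (simp add: cs_real_mult)

lemma pos_proj: "projection e \<Longrightarrow> positive e"
  using pos_proj_combR[of e 0 1] by simp

lemma pos_one_minus_proj: "projection e \<Longrightarrow> positive (1 - e)"
  using pos_proj_combR[of e 1 "-1"] by simp

lemma proj_compl: "projection e \<Longrightarrow> projection (1 - e)"
  by (simp add: projection_def algebra_simps adj_diff)

lemma gamma:
  fixes z e :: "'a::cstar_algebra"
  assumes z: "positive z" and z1: "positive (1 - z)" and e: "projection e" and eze: "e * z * e = 0"
  shows "z * e = 0"
proof -
  have ae: "adj e = e" using e by (simp add: projection_def)
  have sz: "adj z = z" using z pos_sa by blast
  have "positive (e * (z - z * z) * e)" by (rule compress[OF pos_y_minus_sq[OF z z1] e])
  moreover have "e * (z - z * z) * e = - (e * (z * z) * e)"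
    using eze by (simp add: algebra_simps)
  ultimately have "positive (- (e * (z * z) * e))" by simp
  moreover have "positive (e * (z * z) * e)" by (rule compress[OF pos_sq[OF sz] e])
  ultimately have "e * (z * z) * e = 0" using pos_antisym by blast
  moreover have "e * (z * z) * e = adj (z * e) * (z * e)" by (simp add: adj_mult ae sz mult.assoc)
  ultimately show ?thesis using cstar_zero by metis
qed

lemma below_proj:
  fixes y p :: "'a::cstar_algebra"
  assumes p: "projection p" and y: "positive y" and y1: "positive (1 - y)" and yp: "positive (p - y)"
  shows "y * p = y" "p * y = y"
proof -
  have pp: "p * p = p" and ap: "adj p = p" using p by (auto simp: projection_def)
  have sy: "adj y = y" using y pos_sa by blast
  define r where "r = 1 - p"
  have rp: "projection r" unfolding r_def by (rule proj_compl[OF p])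
  have "positive (r * (p - y) * r)" by (rule compress[OF yp rp])
  moreover have "r * (p - y) * r = - (r * y * r)" by (simp add: r_def algebra_simps pp)
  ultimately have "positive (- (r * y * r))" by simp
  moreover have "positive (r * y * r)" by (rule compress[OF y rp])
  ultimately have "r * y * r = 0" using pos_antisym by blast
  hence "y * r = 0" by (rule gamma[OF y y1 rp])
  thus yp1: "y * p = y" by (simp add: r_def algebra_simps)
  have "adj (y * p) = adj y" using yp1 by simp
  thus "p * y = y" by (simp add: adj_mult ap sy)
qed


lemma half_half: "scaleR (1/2) x + scaleR (1/2) x = (x::'a::real_vector)"
  by (simp add: scaleR_left_distrib[symmetric])

lemma lemA:
  fixes y q :: "'a::cstar_algebra"
  assumes q: "projection q" and y: "positive y" and y1: "positive (1 - y)"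
    and yq: "positive (y - q)" and yH: "positive (y - scaleR (1/2) 1)"
  shows "positive (y - (scaleR (1/2) 1 + scaleR (1/2) q))"
proof -
  have qq: "q * q = q" and aq: "adj q = q" using q by (auto simp: projection_def)
  have sy: "adj y = y" using y pos_sa by blast
  have "positive (q * (1 - y) * q)" by (rule compress[OF y1 q])
  moreover have "positive (q * (y - q) * q)" by (rule compress[OF yq q])
  moreover have "q * (y - q) * q = - (q * (1 - y) * q)" by (simp add: algebra_simps qq)
  ultimately have "q * (1 - y) * q = 0" using pos_antisym by metis
  hence "(1 - y) * q = 0" using gamma[OF y1 _ q] y by simp
  hence yq1: "y * q = q" by (simp add: algebra_simps)
  have "adj (y * q) = adj q" using yq1 by simp
  hence qy1: "q * y = q" by (simp add: adj_mult aq sy)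
  have "positive ((1 - q) * (y - scaleR (1/2) 1) * (1 - q))"
    by (rule compress[OF yH proj_compl[OF q]])
  moreover have "(1 - q) * (y - scaleR (1/2) 1) * (1 - q) = y - (scaleR (1/2) 1 + scaleR (1/2) q)"
  proof -
    have qyq: "q * (y * q) = q" using yq1 qq by simp
    show ?thesis by (simp add: algebra_simps qq yq1 qy1 qyq scaleR_diff_right half_half)
  qed
  ultimately show ?thesis by simp
qed

lemma lemB:
  fixes y p :: "'a::cstar_algebra"
  assumes p: "projection p" and y: "positive y" and y1: "positive (1 - y)"
    and yp: "positive (p - y)" and yH: "positive (scaleR (1/2) 1 - y)"
  shows "positive (scaleR (1/2) p - y)"
proof -
  have pp: "p * p = p" using p by (auto simp: projection_def)
  note b = below_proj[OF p y y1 yp]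
  have "positive (p * (scaleR (1/2) 1 - y) * p)" by (rule compress[OF yH p])
  moreover have "p * (scaleR (1/2) 1 - y) * p = scaleR (1/2) p - y"
    by (simp add: algebra_simps pp b)
  ultimately show ?thesis by simp
qed

lemma lemC:
  fixes y p q :: "'a::cstar_algebra"
  assumes p: "projection p" and pq: "p * q = 0" and y: "positive y" and y1: "positive (1 - y)"
    and yp: "positive (p - y)" and ys: "positive ((scaleR (1/2) 1 + scaleR (1/2) q) - y)"
  shows "positive (scaleR (1/2) p - y)"
proof -
  have pp: "p * p = p" using p by (auto simp: projection_def)
  note b = below_proj[OF p y y1 yp]
  have pqx: "p * (q * x) = 0" for x by (simp add: mult.assoc[symmetric] pq)
  have "positive (p * ((scaleR (1/2) 1 + scaleR (1/2) q) - y) * p)" by (rule compress[OF ys p])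
  moreover have "p * ((scaleR (1/2) 1 + scaleR (1/2) q) - y) * p = scaleR (1/2) p - y"
    by (simp add: algebra_simps pp b pqx)
  ultimately show ?thesis by simp
qed

lemma witness:
  fixes p q :: "'a::cstar_algebra"
  assumes p: "projection p" and q: "projection q"
  defines "y \<equiv> scaleR (1/2) p + scaleR (1/4) (p * q * p)"
  shows "positive y" "positive (1 - y)" "positive (p - y)"
    "positive ((scaleR (1/2) 1 + scaleR (1/2) q) - y)"
    "positive (scaleR (1/2) p - y) \<Longrightarrow> p * q = 0"
proof -
  have pp: "p * p = p" and ap: "adj p = p" using p by (auto simp: projection_def)
  have qq: "q * q = q" and aq: "adj q = q" using q by (auto simp: projection_def)
  have pp': "p * (p * x) = p * x" for x by (simp add: mult.assoc[symmetric] pp)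
  have qq': "q * (q * x) = q * x" for x by (simp add: mult.assoc[symmetric] qq)
  have pqp: "positive (p * q * p)" by (rule compress[OF pos_proj[OF q] p])
  have pq1p: "positive (p * (1 - q) * p)" by (rule compress[OF pos_one_minus_proj[OF q] p])
  show y: "positive y" unfolding y_def
    by (rule pos_add; rule pos_scaleR) (simp_all add: pos_proj p pqp)
  have "p - y = scaleR (1/4) p + scaleR (1/4) (p * (1 - q) * p)"
    unfolding y_def by (simp add: algebra_simps pp pp' scaleR_left_distrib[symmetric])
  moreover have "positive (scaleR (1/4) p + scaleR (1/4) (p * (1 - q) * p))"
    by (rule pos_add; rule pos_scaleR) (simp_all add: pos_proj p pq1p)
  ultimately show py: "positive (p - y)" by simp
  have "1 - y = (1 - p) + (p - y)" by simp
  thus "positive (1 - y)" using pos_add[OF pos_one_minus_proj[OF p] py] by simp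
  define X where "X = scaleR (1/2) p + (1 - p)"
  have aX: "adj X = X" by (simp add: X_def adj_add adj_diff adj_scaleR ap)
  have "scaleR (1 + 1/2) p = p + scaleR (1/2) p" by (simp only: scaleR_left_distrib scaleR_one)
  hence tp: "scaleR (3/2) p = p + scaleR (1/2) p" by simp
  have "X * X = scaleR 1 1 + scaleR (- 3/4) p"
    by (simp add: X_def algebra_simps pp pp' scaleR_left_distrib[symmetric] tp)
  hence "positive (X * X)" using pos_proj_combR[OF p, of 1 "-3/4"] by simp
  hence "positive (q * (X * X) * q)" by (rule compress[OF _ q])
  moreover have "q * (X * X) * q = (q * X) * adj (q * X)" by (simp add: adj_mult aX aq mult.assoc)
  ultimately have "positive (adj (q * X) * (q * X))" using pos_ww by metis
  moreover have "adj (q * X) * (q * X) = X * q * X" by (simp add: adj_mult aX aq mult.assoc qq')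
  ultimately have xqx: "positive (X * q * X)" by simp
  have r1: "positive (scaleR (1/2) ((1 - p) * (1 - q) * (1 - p)))"
    by (rule pos_scaleR[OF compress[OF pos_one_minus_proj[OF q] proj_compl[OF p]]]) simp
  have "(scaleR (1/2) 1 + scaleR (1/2) q) - y = X * q * X + scaleR (1/2) ((1 - p) * (1 - q) * (1 - p))"
    unfolding y_def X_def by (simp add: algebra_simps pp pp' qq qq' scaleR_left_distrib[symmetric])
  thus "positive ((scaleR (1/2) 1 + scaleR (1/2) q) - y)" using pos_add[OF xqx r1] by simp
  assume h: "positive (scaleR (1/2) p - y)"
  have "scaleR (1/2) p - y = - scaleR (1/4) (p * q * p)" by (simp add: y_def)
  hence "positive (- scaleR (1/4) (p * q * p))" using h by simp
  moreover have "positive (scaleR (1/4) (p * q * p))" by (rule pos_scaleR[OF pqp]) simp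
  ultimately have "scaleR (1/4) (p * q * p) = 0" using pos_antisym by blast
  hence "p * q * p = 0" by simp
  moreover have "p * q * p = adj (q * p) * (q * p)" by (simp add: adj_mult ap aq mult.assoc qq')
  ultimately have "q * p = 0" using cstar_zero by metis
  hence "adj (q * p) = 0" by simp
  thus "p * q = 0" by (simp add: adj_mult ap aq)
qed


lemma ui_iff: "a \<in> unit_interval \<longleftrightarrow> positive a \<and> positive (1 - a)"
  by (auto simp: unit_interval_def cle_def selfadjoint_def pos_iff)

lemma cle_iff: "cle a b \<longleftrightarrow> positive (b - a)"
  by (simp add: cle_def)

lemma sup_s0:
  fixes q :: "'a::cstar_algebra"
  assumes q: "projection q"
  shows "is_sup1 {q, scaleR (1/2) 1} (scaleR (1/2) 1 + scaleR (1/2) q)"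
proof -
  let ?s = "scaleR (1/2) 1 + scaleR (1/2) q :: 'a"
  have "positive ?s" using pos_proj_combR[OF q, of "1/2" "1/2"] by simp
  moreover have e: "1 - ?s = scaleR (1/2) 1 + scaleR (-1/2) q"
    by (simp add: algebra_simps half_half eq_diff_eq)
  have "positive (1 - ?s)" unfolding e by (rule pos_proj_combR[OF q]) simp_all
  ultimately have ui: "?s \<in> unit_interval" by (simp add: ui_iff)
  have e2: "?s - q = scaleR (1/2) 1 + scaleR (-1/2) q"
    by (simp add: algebra_simps half_half eq_diff_eq)
  have c1: "cle q ?s" unfolding cle_iff e2 by (rule pos_proj_combR[OF q]) simp_all
  have "?s - scaleR (1/2) 1 = scaleR 0 1 + scaleR (1/2) q" by simp
  hence c2: "cle (scaleR (1/2) 1) ?s" using pos_proj_combR[OF q, of 0 "1/2"] by (simp add: cle_iff)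
  show ?thesis unfolding is_sup1_def
  proof (intro conjI ballI impI)
    show "?s \<in> unit_interval" by (rule ui)
  next
    fix x assume "x \<in> {q, scaleR (1/2) 1}" thus "cle x ?s" using c1 c2 by auto
  next
    fix y assume y: "y \<in> unit_interval" and b: "\<forall>x\<in>{q, scaleR (1/2) 1}. cle x y"
    show "cle ?s y" unfolding cle_iff
      by (rule lemA[OF q]) (use y b in \<open>auto simp: ui_iff cle_iff\<close>)
  qed
qed

lemma inf_m0:
  fixes p :: "'a::cstar_algebra"
  assumes p: "projection p"
  shows "is_inf1 {p, scaleR (1/2) 1} (scaleR (1/2) p)"
proof -
  let ?m = "scaleR (1/2) p :: 'a"
  have "positive ?m" using pos_proj_combR[OF p, of 0 "1/2"] by simp
  moreover have "1 - ?m = scaleR 1 1 + scaleR (-1/2) p" by simp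
  hence "positive (1 - ?m)" using pos_proj_combR[OF p, of 1 "-1/2"] by simp
  ultimately have ui: "?m \<in> unit_interval" by (simp add: ui_iff)
  have "p - ?m = scaleR 0 1 + scaleR (1/2) p"
    by (simp add: algebra_simps half_half eq_diff_eq)
  hence c1: "cle ?m p" using pos_proj_combR[OF p, of 0 "1/2"] by (simp add: cle_iff)
  have "scaleR (1/2) 1 - ?m = scaleR (1/2) 1 + scaleR (-1/2) p" by simp
  hence c2: "cle ?m (scaleR (1/2) 1)" using pos_proj_combR[OF p, of "1/2" "-1/2"] by (simp add: cle_iff)
  show ?thesis unfolding is_inf1_def
  proof (intro conjI ballI impI)
    show "?m \<in> unit_interval" by (rule ui)
  next
    fix x assume "x \<in> {p, scaleR (1/2) 1}" thus "cle ?m x" using c1 c2 by auto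
  next
    fix y assume y: "y \<in> unit_interval" and b: "\<forall>x\<in>{p, scaleR (1/2) 1}. cle y x"
    show "cle y ?m" unfolding cle_iff
      by (rule lemB[OF p]) (use y b in \<open>auto simp: ui_iff cle_iff\<close>)
  qed
qed

theorem lemma4p2:
  fixes p q :: "'a::aw_star_algebra"
  assumes "projection p" and "projection q"
  shows "p * q = 0 \<longleftrightarrow>
    (\<exists>s m. is_sup1 {q, scaleR (1/2) 1} s \<and>
           is_inf1 {p, scaleR (1/2) 1} m \<and>
           is_inf1 {p, s} m)"
proof
  let ?s = "scaleR (1/2) 1 + scaleR (1/2) q :: 'a"
  let ?m = "scaleR (1/2) p :: 'a"
  have S: "is_sup1 {q, scaleR (1/2) 1} ?s" by (rule sup_s0[OF assms(2)])
  have M: "is_inf1 {p, scaleR (1/2) 1} ?m" by (rule inf_m0[OF assms(1)])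
  {
    assume pq: "p * q = 0"
    have "is_inf1 {p, ?s} ?m" unfolding is_inf1_def
    proof (intro conjI ballI impI)
      show "?m \<in> unit_interval" using M by (simp add: is_inf1_def)
    next
      fix x assume x: "x \<in> {p, ?s}"
      have "cle ?m p" using M by (simp add: is_inf1_def)
      moreover have "cle ?m ?s"
      proof -
        have e: "?s - ?m = (scaleR (1/2) 1 + scaleR (-1/2) p) + scaleR (1/2) q"
          by (simp add: algebra_simps)
        show ?thesis unfolding cle_iff e
          by (rule pos_add[OF pos_proj_combR[OF assms(1)] pos_scaleR[OF pos_proj[OF assms(2)]]]) simp_all
      qed
      ultimately show "cle ?m x" using x by auto
    next
      fix y assume y: "y \<in> unit_interval" and b: "\<forall>x\<in>{p, ?s}. cle y x"
      show "cle y ?m" unfolding cle_iff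
        by (rule lemC[OF assms(1) pq]) (use y b in \<open>auto simp: ui_iff cle_iff\<close>)
    qed
    thus "\<exists>s m. is_sup1 {q, scaleR (1/2) 1} s \<and> is_inf1 {p, scaleR (1/2) 1} m \<and> is_inf1 {p, s} m"
      using S M by blast
  }
  assume "\<exists>s m. is_sup1 {q, scaleR (1/2) 1} s \<and> is_inf1 {p, scaleR (1/2) 1} m \<and> is_inf1 {p, s} m"
  then obtain s m where s: "is_sup1 {q, scaleR (1/2) 1} s" and m: "is_inf1 {p, scaleR (1/2) 1} m"
    and sm: "is_inf1 {p, s} m" by blast
  have "s = ?s"
  proof -
    have "cle s ?s" using s S by (auto simp: is_sup1_def)
    moreover have "cle ?s s" using S s by (auto simp: is_sup1_def)
    ultimately have "positive (s - ?s)" "positive (- (s - ?s))" by (simp_all add: cle_iff)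
    hence "s - ?s = 0" by (rule pos_antisym)
    thus ?thesis by simp
  qed
  moreover have "m = ?m"
  proof -
    have "cle m ?m" using m M by (auto simp: is_inf1_def)
    moreover have "cle ?m m" using M m by (auto simp: is_inf1_def)
    ultimately have "positive (m - ?m)" "positive (- (m - ?m))" by (simp_all add: cle_iff)
    hence "m - ?m = 0" by (rule pos_antisym)
    thus ?thesis by simp
  qed
  ultimately have I: "is_inf1 {p, ?s} ?m" using sm by simp
  let ?y = "scaleR (1/2) p + scaleR (1/4) (p * q * p) :: 'a"
  note W = witness[OF assms]
  have "?y \<in> unit_interval" using W(1,2) by (simp add: ui_iff)
  moreover have "\<forall>x\<in>{p, ?s}. cle ?y x" using W(3,4) by (simp add: cle_iff)
  ultimately have "cle ?y ?m" using I unfolding is_inf1_def by blast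
  thus "p * q = 0" using W(5) by (simp add: cle_iff)
qed

end
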